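(* Let $k\ge0$, $n>2k$ and $\epsilon>0$. Fix any sequence $(s_{k,t})_{t=k+1}^{n-k}$ of maps $s_{k,t}:\mathcal Z^{2k+1}\to\hat{\mathcal X}$. Then for all $x^n\in\mathcal X^n$, $$\Pr\Big(L(x_{k+1}^{n-k},Z^n)-\tilde L(Z^n)>\epsilon\Big)\le(k+1)\exp\Big(-\frac{2(n-2k)\epsilon^2}{(k+1)L_{\max}^2}\Big)$$ and $$\Pr\Big(\tilde L(Z^n)-L(x_{k+1}^{n-k},Z^n)>\epsilon\Big)\le(k+1)\exp\Big(-\frac{2(n-2k)\epsilon^2}{(k+1)L_{\max}^2}\Big),$$ where $L(x_{k+1}^{n-k},z^n)=\frac1{n-2k}\sum_{t=k+1}^{n-k}\Lambda\big(x_t,s_{k,t}(z_{t-k}^{t+k})\big)$ and $\tilde L(z^n)=\frac1{n-2k}\sum_{t=k+1}^{n-k}\ell\big(z_t,s_{k,t}(\mathbf c_t,\cdot)\big)$.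
   Context: Let $\mathcal X,\mathcal Z,\hat{\mathcal X}$ be finite alphabets and $\Pi=\{\Pi(x,z)\}$ a $|\mathcal X|\times|\mathcal Z|$ stochastic matrix (discrete memoryless channel) of full row rank. For deterministic $x^n\in\mathcal X^n$, the channel output $Z^n$ has independent components with $\Pr(Z_t=z)=\Pi(x_t,z)$. Fix a loss $\Lambda:\mathcal X\times\hat{\mathcal X}\to[0,\infty)$, $\Lambda_{\max}=\max_{x,\hat x}\Lambda(x,\hat x)$. Let $\mathcal S$ be the set of all maps $s:\mathcal Z\to\hat{\mathcal X}$. Fix a real $|\mathcal Z|\times|\mathcal X|$ matrix $H$ with $\Pi H=I$; $h(z)\in\mathbb R^{\mathcal X}$ is the column vector equal to the $z$-th row of $H$. For $s\in\mathcal S$, $\rho_x(s)=\sum_z\Lambda(x,s(z))\Pi(x,z)$ and $\ell(z,s)=h(z)^T\rho(s)$. Let $\ell_{\max}=\max_{z,s}\ell(z,s)-\min_{z,s}\ell(z,s)$, $L_{\max}=\Lambda_{\max}+\ell_{\max}$. For $z^n$ and $k+1\le t\le n-k$, the context is $\mathbf c_t=(z_{t-k}^{t-1},z_{t+1}^{t+k})$, and $s_{k,t}(\mathbf c_t,\cdot)\in\mathcal S$ is the map $z\mapsto s_{k,t}(z_{t-k}^{t-1},z,z_{t+1}^{t+k})$. *)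

theory Defs
  imports "HOL-Probability.Probability"
begin

text \<open>Alphabets are finite types 'x (clean symbols), 'z (channel outputs), 'xh (reconstructions).
  The DMC Pi is given row-wise as pmfs: Pi(x,z) = pmf (Ch x) z.
  H is a |Z| x |X| real matrix, h(z) its z-th row.\<close>

definition rho :: "('x::finite \<Rightarrow> 'z::finite pmf) \<Rightarrow> ('x \<Rightarrow> 'xh \<Rightarrow> real) \<Rightarrow> ('z \<Rightarrow> 'xh) \<Rightarrow> 'x \<Rightarrow> real" where
  "rho Ch Lam s x = (\<Sum>z\<in>UNIV. Lam x (s z) * pmf (Ch x) z)"

definition ell :: "('x::finite \<Rightarrow> 'z::finite pmf) \<Rightarrow> ('z \<Rightarrow> 'x \<Rightarrow> real) \<Rightarrow> ('x \<Rightarrow> 'xh \<Rightarrow> real) \<Rightarrow> 'z \<Rightarrow> ('z \<Rightarrow> 'xh) \<Rightarrow> real" where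
  "ell Ch H Lam z s = (\<Sum>x\<in>UNIV. H z x * rho Ch Lam s x)"

definition Lambda_max :: "('x::finite \<Rightarrow> 'xh::finite \<Rightarrow> real) \<Rightarrow> real" where
  "Lambda_max Lam = Max {Lam x xh | x xh. True}"

definition ell_max :: "('x::finite \<Rightarrow> 'z::finite pmf) \<Rightarrow> ('z \<Rightarrow> 'x \<Rightarrow> real) \<Rightarrow> ('x \<Rightarrow> 'xh::finite \<Rightarrow> real) \<Rightarrow> real" where
  "ell_max Ch H Lam = Max {ell Ch H Lam z s | z s. True} - Min {ell Ch H Lam z s | z s. True}"

definition L_max :: "('x::finite \<Rightarrow> 'z::finite pmf) \<Rightarrow> ('z \<Rightarrow> 'x \<Rightarrow> real) \<Rightarrow> ('x \<Rightarrow> 'xh::finite \<Rightarrow> real) \<Rightarrow> real" where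
  "L_max Ch H Lam = Lambda_max Lam + ell_max Ch H Lam"

text \<open>Sequences x^n, z^n are functions on nat, indices 1..n. The sliding-window denoiser
  s t : Z^{2k+1} -> Xh is applied to the list [z_{t-k}, ..., z_{t+k}].\<close>

definition window :: "nat \<Rightarrow> nat \<Rightarrow> (nat \<Rightarrow> 'z) \<Rightarrow> 'z list" where
  "window k t zs = map zs [t - k..<t + k + 1]"

text \<open>s_{k,t}(c_t, .) : z |-> s_{k,t}(z_{t-k}^{t-1}, z, z_{t+1}^{t+k})\<close>
definition ctx_map :: "nat \<Rightarrow> nat \<Rightarrow> (nat \<Rightarrow> 'z list \<Rightarrow> 'xh) \<Rightarrow> (nat \<Rightarrow> 'z) \<Rightarrow> 'z \<Rightarrow> 'xh" where
  "ctx_map k t s zs = (\<lambda>z. s t (map zs [t - k..<t] @ [z] @ map zs [t + 1..<t + k + 1]))"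

definition L_true :: "nat \<Rightarrow> nat \<Rightarrow> ('x \<Rightarrow> 'xh \<Rightarrow> real) \<Rightarrow> (nat \<Rightarrow> 'z list \<Rightarrow> 'xh) \<Rightarrow> (nat \<Rightarrow> 'x) \<Rightarrow> (nat \<Rightarrow> 'z) \<Rightarrow> real" where
  "L_true n k Lam s xs zs =
     (1 / (real n - 2 * real k)) * (\<Sum>t = k + 1..n - k. Lam (xs t) (s t (window k t zs)))"

definition L_tilde :: "('x::finite \<Rightarrow> 'z::finite pmf) \<Rightarrow> ('z \<Rightarrow> 'x \<Rightarrow> real) \<Rightarrow> ('x \<Rightarrow> 'xh \<Rightarrow> real) \<Rightarrow> nat \<Rightarrow> nat \<Rightarrow> (nat \<Rightarrow> 'z list \<Rightarrow> 'xh) \<Rightarrow> (nat \<Rightarrow> 'z) \<Rightarrow> real" where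
  "L_tilde Ch H Lam n k s zs =
     (1 / (real n - 2 * real k)) * (\<Sum>t = k + 1..n - k. ell Ch H Lam (zs t) (ctx_map k t s zs))"

definition channel_out :: "('x \<Rightarrow> 'z pmf) \<Rightarrow> nat \<Rightarrow> (nat \<Rightarrow> 'x) \<Rightarrow> (nat \<Rightarrow> 'z) pmf" where
  "channel_out Ch n xs = Pi_pmf {1..n} undefined (\<lambda>t. Ch (xs t))"

end

theory Submission imports Defs begin

definition Dt :: "('x::finite \<Rightarrow> 'z::finite pmf) \<Rightarrow> ('z \<Rightarrow> 'x \<Rightarrow> real) \<Rightarrow> ('x \<Rightarrow> 'xh \<Rightarrow> real)
   \<Rightarrow> (nat \<Rightarrow> 'z list \<Rightarrow> 'xh) \<Rightarrow> (nat \<Rightarrow> 'x) \<Rightarrow> nat \<Rightarrow> nat \<Rightarrow> (nat \<Rightarrow> 'z) \<Rightarrow> real" where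
  "Dt Ch H Lam s xs k t zs = Lam (xs t) (s t (window k t zs)) - ell Ch H Lam (zs t) (ctx_map k t s zs)"

lemma Dt_local:
  assumes "\<And>i. t - k \<le> i \<Longrightarrow> i \<le> t + k \<Longrightarrow> zs i = zs' i"
  shows "Dt Ch H Lam s xs k t zs = Dt Ch H Lam s xs k t zs'"
proof -
  have w: "window k t zs = window k t zs'" unfolding window_def
    by (intro map_cong refl) (use assms in auto)
  have c: "ctx_map k t s zs = ctx_map k t s zs'" unfolding ctx_map_def
    by (intro ext arg_cong[where f="s t"]) (auto intro!: map_cong assms)
  have "zs t = zs' t" by (rule assms) auto
  then show ?thesis unfolding Dt_def w c by simp
qed

lemma window_split: "k \<le> t \<Longrightarrow> window k t zs = ctx_map k t s zs' z \<Longrightarrow> True" by simp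

lemma window_upd:
  assumes "k \<le> t"
  shows "s t (window k t (g(t := z))) = ctx_map k t s g z"
proof -
  have "[t - k..<t + k + 1] = [t-k..<t] @ [t] @ [t+1..<t+k+1]"
  proof -
    have 1: "[t-k..<t+(k+1)] = [t-k..<t] @ [t..<t+(k+1)]"
      using assms by (intro upt_add_eq_append) simp
    have 2: "[t..<t+(k+1)] = t # [t+1..<t+(k+1)]" by (simp add: upt_conv_Cons)
    show ?thesis using 1 2 by simp
  qed
  then show ?thesis unfolding window_def ctx_map_def
    by (auto intro!: arg_cong[where f="s t"] map_cong)
qed

lemma ctx_upd: "ctx_map k t s (g(t := z)) = ctx_map k t s g"
  unfolding ctx_map_def by (auto intro!: ext arg_cong[where f="s t"] map_cong)

lemma Dt_upd:
  assumes "k \<le> t"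
  shows "Dt Ch H Lam s xs k t (g(t := z)) = Lam (xs t) (ctx_map k t s g z) - ell Ch H Lam z (ctx_map k t s g)"
  by (simp only: Dt_def window_upd[OF assms] ctx_upd fun_upd_same)

lemma mean_zero:
  fixes Ch :: "'x::finite \<Rightarrow> 'z::finite pmf"
  assumes right_inv: "\<And>x x'. (\<Sum>z\<in>UNIV. pmf (Ch x) z * H z x') = (if x = x' then 1 else 0)"
  and "k \<le> t"
  shows "measure_pmf.expectation (Ch (xs t)) (\<lambda>z. c * Dt Ch H Lam s xs k t (g(t := z))) = 0"
proof -
  let ?x = "xs t" let ?\<sigma> = "ctx_map k t s g"
  have "measure_pmf.expectation (Ch ?x) (\<lambda>z. c * Dt Ch H Lam s xs k t (g(t := z)))
     = (\<Sum>z\<in>UNIV. c * (Lam ?x (?\<sigma> z) - ell Ch H Lam z ?\<sigma>) * pmf (Ch ?x) z)"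
    by (subst integral_measure_pmf_real[where A=UNIV]) (auto simp: Dt_upd[OF assms(2)])
  also have "\<dots> = c * (rho Ch Lam ?\<sigma> ?x - (\<Sum>z\<in>UNIV. pmf (Ch ?x) z * ell Ch H Lam z ?\<sigma>))"
    unfolding rho_def by (simp add: sum_distrib_left sum_subtractf algebra_simps)
  also have "(\<Sum>z\<in>UNIV. pmf (Ch ?x) z * ell Ch H Lam z ?\<sigma>)
     = (\<Sum>x'\<in>UNIV. (\<Sum>z\<in>UNIV. pmf (Ch ?x) z * H z x') * rho Ch Lam ?\<sigma> x')"
    unfolding ell_def by (simp add: sum_distrib_left sum_distrib_right mult.assoc) (rule sum.swap)
  also have "\<dots> = (\<Sum>x'\<in>UNIV. if ?x = x' then rho Ch Lam ?\<sigma> x' else 0)"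
    by (intro sum.cong) (auto simp: right_inv)
  also have "\<dots> = rho Ch Lam ?\<sigma> ?x" by simp
  finally show ?thesis by (simp only: diff_self mult_zero_right)
qed

lemma map_pair_bind:
  "map_pmf h (pair_pmf X Y) = bind_pmf X (\<lambda>g. map_pmf (\<lambda>f. h (g, f)) Y)"
  by (simp add: pair_pmf_def map_bind_pmf map_pmf_def bind_assoc_pmf bind_return_pmf)

lemma class_bound:
  fixes Ch :: "'x::finite \<Rightarrow> 'z::finite pmf"
  assumes right_inv: "\<And>x x'. (\<Sum>z\<in>UNIV. pmf (Ch x) z * H z x') = (if x = x' then 1 else 0)"
  and C: "C \<subseteq> {k+1..n-k}" "C \<noteq> {}"
  and sep: "\<And>t t'. t \<in> C \<Longrightarrow> t' \<in> C \<Longrightarrow> t \<noteq> t' \<Longrightarrow> t' + k < t \<or> t + k < t'"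
  and bnd: "\<And>t zs. c * Dt Ch H Lam s xs k t zs \<in> {a..b}"
  and ab: "a < b" and tau: "\<tau> \<ge> 0"
  shows "measure_pmf.prob (Pi_pmf {1..n} undefined (\<lambda>t. Ch (xs t)))
           {zs. \<tau> \<le> (\<Sum>t\<in>C. c * Dt Ch H Lam s xs k t zs)}
         \<le> exp (-2 * \<tau>\<^sup>2 / (real (card C) * (b - a)\<^sup>2))"
proof -
  define A where "A = {1..n} - C"
  define p where "p = (\<lambda>t. Ch (xs t))"
  define E where "E = {zs. \<tau> \<le> (\<Sum>t\<in>C. c * Dt Ch H Lam s xs k t zs)}"
  define B where "B = exp (-2 * \<tau>\<^sup>2 / (real (card C) * (b - a)\<^sup>2))"
  define Q where "Q = Pi_pmf C undefined p"
  have finC: "finite C" using C(1) finite_subset by blast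
  have C1n: "\<And>x. x \<in> C \<Longrightarrow> 1 \<le> x \<and> x \<le> n" using C(1) by fastforce
  have CA: "{1..n} = A \<union> C" "A \<inter> C = {}" using C1n unfolding A_def by auto
  have split: "Pi_pmf {1..n} undefined p =
     bind_pmf (Pi_pmf A undefined p) (\<lambda>g. map_pmf (\<lambda>f x. if x \<in> A then g x else f x) Q)"
    unfolding Q_def CA(1)
    by (subst Pi_pmf_union) (use CA(2) finC C1n in \<open>auto simp: A_def map_pair_bind\<close>)
  have inner: "measure_pmf.prob (map_pmf (\<lambda>f x. if x \<in> A then g x else f x) Q) E \<le> B" for g
  proof -
    define X where "X = (\<lambda>t f. c * Dt Ch H Lam s xs k t (g(t := (f::nat \<Rightarrow> 'z) t)))"
    have loc: "Dt Ch H Lam s xs k t (\<lambda>x. if x \<in> A then g x else f x) = Dt Ch H Lam s xs k t (g(t := f t))"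
      if t: "t \<in> C" for t f
    proof (rule Dt_local)
      fix i assume i: "t - k \<le> i" "i \<le> t + k"
      have tr: "k + 1 \<le> t" "t \<le> n - k" using t C(1) by auto
      show "(if i \<in> A then g i else f i) = (g(t := f t)) i"
      proof (cases "i \<in> A")
        case True then show ?thesis using t by (auto simp: A_def)
      next
        case False
        then have "i \<in> C" using i tr unfolding A_def by auto
        then have "i = t" using sep[OF t] i by force
        then show ?thesis using False by simp
      qed
    qed
    have "(\<lambda>f x. if x \<in> A then g x else f x) -` E = {f. \<tau> \<le> (\<Sum>t\<in>C. X t f)}"
    proof -
      have "(\<Sum>t\<in>C. c * Dt Ch H Lam s xs k t (\<lambda>x. if x \<in> A then g x else f x)) = (\<Sum>t\<in>C. X t f)" for f
        unfolding X_def by (intro sum.cong refl) (simp only: loc)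
      then show ?thesis unfolding E_def by auto
    qed
    then have eq: "measure_pmf.prob (map_pmf (\<lambda>f x. if x \<in> A then g x else f x) Q) E
         = measure_pmf.prob Q {f. \<tau> \<le> (\<Sum>t\<in>C. X t f)}" by simp
    have exp0: "measure_pmf.expectation Q (X t) = 0" if t: "t \<in> C" for t
    proof -
      have "measure_pmf.expectation Q (X t) = measure_pmf.expectation (map_pmf (\<lambda>f. f t) Q)
              (\<lambda>z. c * Dt Ch H Lam s xs k t (g(t := z)))"
        by (simp add: X_def)
      also have "map_pmf (\<lambda>f. f t) Q = Ch (xs t)" unfolding Q_def
        by (subst Pi_pmf_component) (use finC t in \<open>auto simp: p_def\<close>)
      also have "measure_pmf.expectation (Ch (xs t)) (\<lambda>z. c * Dt Ch H Lam s xs k t (g(t := z))) = 0"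
        by (rule mean_zero[OF right_inv]) (use t C(1) in auto)
      finally show ?thesis .
    qed
    interpret Hf: Hoeffding_ineq "measure_pmf Q" C X "\<lambda>_. a" "\<lambda>_. b"
       "\<Sum>i\<in>C. measure_pmf.expectation Q (X i)"
    proof unfold_locales
      show "finite C" by (rule finC)
      show "prob_space.indep_vars (measure_pmf Q) (\<lambda>_. borel) X C"
        unfolding Q_def X_def
        by (intro prob_space.indep_vars_compose2[OF _ indep_vars_Pi_pmf[OF finC], where Y="\<lambda>t z. c * Dt Ch H Lam s xs k t (g(t := z))", simplified])
           (auto simp: measure_pmf.prob_space_axioms)
      show "AE x in measure_pmf Q. X i x \<in> {a..b}" if "i \<in> C" for i
        using bnd unfolding X_def by (intro AE_I2) auto
    qed simp
    have mu: "(\<Sum>i\<in>C. measure_pmf.expectation Q (X i)) = 0" using exp0 by simp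
    have "measure_pmf.prob Q {x \<in> space (measure_pmf Q). (\<Sum>i\<in>C. X i x) \<ge> (\<Sum>i\<in>C. measure_pmf.expectation Q (X i)) + \<tau>}
       \<le> exp (-2 * \<tau>\<^sup>2 / (\<Sum>i\<in>C. (b - a)\<^sup>2))"
    proof (rule Hf.Hoeffding_ineq_ge)
      have "card C > 0" using finC C(2) by (simp add: card_gt_0_iff)
      then show "(\<Sum>i\<in>C. (b - a)\<^sup>2) > 0" using ab by simp
    qed (use tau in auto)
    then show ?thesis unfolding eq B_def mu by simp
  qed
  have "emeasure (measure_pmf (Pi_pmf {1..n} undefined p)) E
      = (\<integral>\<^sup>+g. emeasure (measure_pmf (map_pmf (\<lambda>f x. if x \<in> A then g x else f x) Q)) E \<partial>measure_pmf (Pi_pmf A undefined p))"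
    unfolding split by simp
  also have "\<dots> \<le> (\<integral>\<^sup>+g. ennreal B \<partial>measure_pmf (Pi_pmf A undefined p))"
    by (intro nn_integral_mono) (use inner in \<open>auto simp: measure_pmf.emeasure_eq_measure intro: ennreal_leI\<close>)
  also have "\<dots> = ennreal B" by simp
  finally have "emeasure (measure_pmf (Pi_pmf {1..n} undefined p)) E \<le> ennreal B" .
  then show ?thesis unfolding E_def[symmetric] B_def[symmetric] p_def[symmetric]
    by (simp add: measure_pmf.emeasure_eq_measure B_def)
qed

lemma dir_bound:
  fixes Ch :: "'x::finite \<Rightarrow> 'z::finite pmf"
  assumes right_inv: "\<And>x x'. (\<Sum>z\<in>UNIV. pmf (Ch x) z * H z x') = (if x = x' then 1 else 0)"
  and n_gt: "n > 2 * k" and eps_pos: "\<epsilon> > 0"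
  and bnd: "\<And>t zs. c * Dt Ch H Lam s xs k t zs \<in> {a..b}"
  and ab: "a < b"
  shows "measure_pmf.prob (Pi_pmf {1..n} undefined (\<lambda>t. Ch (xs t)))
           {zs. (real n - 2 * real k) * \<epsilon> < (\<Sum>t = k + 1..n - k. c * Dt Ch H Lam s xs k t zs)}
         \<le> real (k + 1) * exp (- (2 * (real n - 2 * real k) * \<epsilon>\<^sup>2) / (real (k + 1) * (b - a)\<^sup>2))"
proof -
  define N where "N = real n - 2 * real k"
  define T where "T = {k + 1..n - k}"
  define P where "P = Pi_pmf {1..n} undefined (\<lambda>t. Ch (xs t))"
  define Ct where "Ct = (\<lambda>r. {t. t \<in> T \<and> t mod (k+1) = r})"
  define m where "m = (\<lambda>r. real (card (Ct r)))"
  define \<tau> where "\<tau> = (\<lambda>r. sqrt (m r * (N / real (k+1))) * \<epsilon>)"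
  define S where "S = (\<lambda>r zs. \<Sum>t\<in>Ct r. c * Dt Ch H Lam s xs k t zs)"
  define ev where "ev = (\<lambda>r. {zs. \<tau> r < S r zs})"
  define E0 where "E0 = exp (- (2 * N * \<epsilon>\<^sup>2) / (real (k + 1) * (b - a)\<^sup>2))"
  have Npos: "N > 0" using n_gt unfolding N_def by simp
  have finT: "finite T" unfolding T_def by simp
  have grp: "(\<Sum>r<k+1. \<Sum>t\<in>Ct r. f t) = (\<Sum>t\<in>T. f t)" for f :: "nat \<Rightarrow> real"
    unfolding Ct_def by (rule sum.group) (use finT in auto)
  have cardT: "real (card T) = N" unfolding T_def N_def using n_gt by (simp add: of_nat_diff)
  have msum: "(\<Sum>r<k+1. m r) = N"
    using grp[of "\<lambda>_. 1"] cardT unfolding m_def by simp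
  have m_nn: "m r \<ge> 0" for r unfolding m_def by simp
  have tau_le: "\<tau> r \<le> (m r + N / real (k+1)) / 2 * \<epsilon>" for r
    unfolding \<tau>_def using eps_pos Npos m_nn[of r]
    by (intro mult_right_mono arith_geo_mean_sqrt) auto
  have tau_sum: "(\<Sum>r<k+1. \<tau> r) \<le> N * \<epsilon>"
  proof -
    have "(\<Sum>r<k+1. \<tau> r) \<le> (\<Sum>r<k+1. (m r + N / real (k+1)) / 2 * \<epsilon>)"
      by (intro sum_mono tau_le)
    also have "\<dots> = ((\<Sum>r<k+1. m r) + N) / 2 * \<epsilon>"
      by (simp add: sum_distrib_right[symmetric] sum_divide_distrib[symmetric] sum.distrib)
    also have "\<dots> = N * \<epsilon>" using msum by simp
    finally show ?thesis .
  qed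
  have sub: "{zs. N * \<epsilon> < (\<Sum>t\<in>T. c * Dt Ch H Lam s xs k t zs)} \<subseteq> (\<Union>r\<in>{..<k+1}. ev r)"
  proof
    fix zs assume zs: "zs \<in> {zs. N * \<epsilon> < (\<Sum>t\<in>T. c * Dt Ch H Lam s xs k t zs)}"
    show "zs \<in> (\<Union>r\<in>{..<k+1}. ev r)"
    proof (rule ccontr)
      assume "zs \<notin> (\<Union>r\<in>{..<k+1}. ev r)"
      then have "S r zs \<le> \<tau> r" if "r < k+1" for r using that unfolding ev_def by (auto simp: not_less)
      then have "(\<Sum>r<k+1. S r zs) \<le> (\<Sum>r<k+1. \<tau> r)" by (intro sum_mono) auto
      also have "(\<Sum>r<k+1. S r zs) = (\<Sum>t\<in>T. c * Dt Ch H Lam s xs k t zs)"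
        unfolding S_def by (rule grp)
      finally show False using zs tau_sum by simp
    qed
  qed
  have each: "measure_pmf.prob P (ev r) \<le> E0" if r: "r < k+1" for r
  proof (cases "Ct r = {}")
    case True
    then have "ev r = {}" unfolding ev_def S_def \<tau>_def m_def by simp
    then show ?thesis unfolding E0_def by simp
  next
    case False
    have CT: "Ct r \<subseteq> {k+1..n-k}" unfolding Ct_def T_def by auto
    have sep: "t' + k < t \<or> t + k < t'" if "t \<in> Ct r" "t' \<in> Ct r" "t \<noteq> t'" for t t'
    proof -
      have md: "t mod (k+1) = t' mod (k+1)" using that unfolding Ct_def by auto
      have "k + 1 \<le> t - t'" if "t' < t"
      proof -
        have "(k+1) dvd (t - t')" using md that mod_eq_dvd_iff_nat[of t' t "k+1"] by simp
        then show ?thesis using that by (intro dvd_imp_le) auto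
      qed
      moreover have "k + 1 \<le> t' - t" if "t < t'"
      proof -
        have "(k+1) dvd (t' - t)" using md that mod_eq_dvd_iff_nat[of t t' "k+1"] by simp
        then show ?thesis using that by (intro dvd_imp_le) auto
      qed
      ultimately show ?thesis using \<open>t \<noteq> t'\<close> by linarith
    qed
    have tau_nn: "\<tau> r \<ge> 0" unfolding \<tau>_def using eps_pos Npos m_nn[of r] by simp
    have mpos: "m r > 0" unfolding m_def using False finT
      by (simp add: Ct_def card_gt_0_iff)
    have "measure_pmf.prob P (ev r) \<le> measure_pmf.prob P {zs. \<tau> r \<le> (\<Sum>t\<in>Ct r. c * Dt Ch H Lam s xs k t zs)}"
      unfolding ev_def S_def by (intro measure_pmf.finite_measure_mono) auto
    also have "\<dots> \<le> exp (-2 * (\<tau> r)\<^sup>2 / (real (card (Ct r)) * (b - a)\<^sup>2))"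
      unfolding P_def by (rule class_bound[OF right_inv CT False sep bnd ab tau_nn])
    also have "-2 * (\<tau> r)\<^sup>2 / (real (card (Ct r)) * (b - a)\<^sup>2) = - (2 * N * \<epsilon>\<^sup>2) / (real (k + 1) * (b - a)\<^sup>2)"
    proof -
      have "(\<tau> r)\<^sup>2 = m r * (N / real (k+1)) * \<epsilon>\<^sup>2"
        unfolding \<tau>_def using m_nn[of r] Npos by (simp add: power_mult_distrib)
      moreover have "real (card (Ct r)) = m r" by (simp add: m_def)
      ultimately have "-2 * (\<tau> r)\<^sup>2 / (real (card (Ct r)) * (b - a)\<^sup>2)
          = -2 * (m r * (N / real (k+1)) * \<epsilon>\<^sup>2) / (m r * (b - a)\<^sup>2)" by simp
      also have "\<dots> = - (2 * N * \<epsilon>\<^sup>2) / (real (k + 1) * (b - a)\<^sup>2)"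
      proof -
        have "-2 * (m r * (N / real (k+1)) * \<epsilon>\<^sup>2) / (m r * (b - a)\<^sup>2)
           = (m r * (-(2 * N * \<epsilon>\<^sup>2) / real (k+1))) / (m r * (b - a)\<^sup>2)"
          by (simp add: algebra_simps)
        also have "\<dots> = (-(2 * N * \<epsilon>\<^sup>2) / real (k+1)) / ((b - a)\<^sup>2)"
          using mpos by (intro mult_divide_mult_cancel_left) simp
        also have "\<dots> = - (2 * N * \<epsilon>\<^sup>2) / (real (k + 1) * (b - a)\<^sup>2)"
          by (simp add: divide_divide_eq_left)
        finally show ?thesis .
      qed
      finally show ?thesis .
    qed
    finally show ?thesis unfolding E0_def .
  qed
  have "measure_pmf.prob P {zs. N * \<epsilon> < (\<Sum>t\<in>T. c * Dt Ch H Lam s xs k t zs)}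
      \<le> measure_pmf.prob P (\<Union>r\<in>{..<k+1}. ev r)"
    by (intro measure_pmf.finite_measure_mono sub) auto
  also have "\<dots> \<le> (\<Sum>r<k+1. measure_pmf.prob P (ev r))"
    by (intro measure_pmf.finite_measure_subadditive_finite) auto
  also have "\<dots> \<le> (\<Sum>r<k+1. E0)" by (intro sum_mono each) auto
  also have "\<dots> = real (k+1) * E0" by simp
  finally show ?thesis unfolding P_def N_def T_def E0_def .
qed

theorem lemma2:
  fixes Ch :: "'x::finite \<Rightarrow> 'z::finite pmf"
    and H :: "'z \<Rightarrow> 'x \<Rightarrow> real"
    and Lam :: "'x \<Rightarrow> 'xh::finite \<Rightarrow> real"
    and s :: "nat \<Rightarrow> 'z list \<Rightarrow> 'xh"
    and k n :: nat and \<epsilon> :: real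
    and xs :: "nat \<Rightarrow> 'x"
  assumes full_rank: "\<And>c :: 'x \<Rightarrow> real. (\<forall>z. (\<Sum>x\<in>UNIV. c x * pmf (Ch x) z) = 0) \<Longrightarrow> c = (\<lambda>_. 0)"
    and right_inv: "\<And>x x'. (\<Sum>z\<in>UNIV. pmf (Ch x) z * H z x') = (if x = x' then 1 else 0)"
    and Lam_nonneg: "\<And>x xh. Lam x xh \<ge> 0"
    and n_gt: "n > 2 * k"
    and eps_pos: "\<epsilon> > 0"
  shows "measure_pmf.prob (channel_out Ch n xs)
           {zs. L_true n k Lam s xs zs - L_tilde Ch H Lam n k s zs > \<epsilon>}
         \<le> real (k + 1) * exp (- (2 * (real n - 2 * real k) * \<epsilon>\<^sup>2) / (real (k + 1) * (L_max Ch H Lam)\<^sup>2))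
       \<and> measure_pmf.prob (channel_out Ch n xs)
           {zs. L_tilde Ch H Lam n k s zs - L_true n k Lam s xs zs > \<epsilon>}
         \<le> real (k + 1) * exp (- (2 * (real n - 2 * real k) * \<epsilon>\<^sup>2) / (real (k + 1) * (L_max Ch H Lam)\<^sup>2))"
proof -
  define N where "N = real n - 2 * real k"
  define Lm where "Lm = Lambda_max Lam"
  define ES where "ES = {ell Ch H Lam z \<sigma> | z \<sigma>. True}"
  define M1 where "M1 = Max ES"
  define m1 where "m1 = Min ES"
  have Npos: "N > 0" using n_gt unfolding N_def by simp
  have finL: "finite {Lam x xh | x xh. True}"
    by (rule finite_subset[of _ "case_prod Lam ` UNIV"]) auto
  have finE: "finite ES" unfolding ES_def
    by (rule finite_subset[of _ "case_prod (ell Ch H Lam) ` UNIV"]) auto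
  have lam_le: "Lam x xh \<le> Lm" for x xh
    unfolding Lm_def Lambda_max_def by (rule Max_ge[OF finL]) auto
  have ell_in: "m1 \<le> ell Ch H Lam z \<sigma> \<and> ell Ch H Lam z \<sigma> \<le> M1" for z \<sigma>
  proof -
    have "ell Ch H Lam z \<sigma> \<in> ES" unfolding ES_def by auto
    then show ?thesis unfolding m1_def M1_def using finE by auto
  qed
  have b1: "1 * Dt Ch H Lam s xs k t zs \<in> {-M1..Lm - m1}" for t zs
    using lam_le[of "xs t" "s t (window k t zs)"] Lam_nonneg[of "xs t" "s t (window k t zs)"]
      ell_in[of "zs t" "ctx_map k t s zs"] unfolding Dt_def by auto
  have b2: "-1 * Dt Ch H Lam s xs k t zs \<in> {m1 - Lm..M1}" for t zs
    using lam_le[of "xs t" "s t (window k t zs)"] Lam_nonneg[of "xs t" "s t (window k t zs)"]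
      ell_in[of "zs t" "ctx_map k t s zs"] unfolding Dt_def by auto
  have LM: "L_max Ch H Lam = (Lm - m1) - (-M1)" "L_max Ch H Lam = M1 - (m1 - Lm)"
    unfolding L_max_def ell_max_def Lm_def M1_def m1_def ES_def by simp_all
  have diff: "L_true n k Lam s xs zs - L_tilde Ch H Lam n k s zs
      = (1 / N) * (\<Sum>t = k + 1..n - k. 1 * Dt Ch H Lam s xs k t zs)" for zs
    unfolding L_true_def L_tilde_def Dt_def N_def by (simp add: sum_subtractf right_diff_distrib)
  have ev1: "{zs. L_true n k Lam s xs zs - L_tilde Ch H Lam n k s zs > \<epsilon>}
     = {zs. N * \<epsilon> < (\<Sum>t = k + 1..n - k. 1 * Dt Ch H Lam s xs k t zs)}"
  proof -
    have "\<epsilon> < (1 / N) * x \<longleftrightarrow> N * \<epsilon> < x" for x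
      using Npos by (simp add: field_simps)
    then show ?thesis by (simp only: diff)
  qed
  have ev2: "{zs. L_tilde Ch H Lam n k s zs - L_true n k Lam s xs zs > \<epsilon>}
     = {zs. N * \<epsilon> < (\<Sum>t = k + 1..n - k. -1 * Dt Ch H Lam s xs k t zs)}"
  proof -
    have "\<epsilon> < - ((1 / N) * x) \<longleftrightarrow> N * \<epsilon> < (\<Sum>t = k + 1..n - k. -1 * f t)"
      if "x = (\<Sum>t = k + 1..n - k. 1 * f t)" for x and f :: "nat \<Rightarrow> real"
      using Npos that by (simp add: field_simps sum_negf)
    moreover have "L_tilde Ch H Lam n k s zs - L_true n k Lam s xs zs
       = - (L_true n k Lam s xs zs - L_tilde Ch H Lam n k s zs)" for zs by simp
    ultimately show ?thesis by (simp only: diff)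
  qed
  show ?thesis
  proof (cases "L_max Ch H Lam = 0")
    case True
    have "measure_pmf.prob (channel_out Ch n xs) X \<le> real (k + 1) * exp (- (2 * (real n - 2 * real k) * \<epsilon>\<^sup>2) / (real (k + 1) * (L_max Ch H Lam)\<^sup>2))" for X
    proof -
      have "measure_pmf.prob (channel_out Ch n xs) X \<le> 1" by simp
      also have "1 \<le> real (k + 1) * exp (- (2 * (real n - 2 * real k) * \<epsilon>\<^sup>2) / (real (k + 1) * (L_max Ch H Lam)\<^sup>2))"
        using True by simp
      finally show ?thesis .
    qed
    then show ?thesis by blast
  next
    case False
    have "-M1 \<le> Lm - m1" using b1[of 0 undefined] by simp
    then have ab1: "-M1 < Lm - m1" using False LM(1) by simp
    have ab2: "m1 - Lm < M1" using ab1 by simp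
    note r1 = dir_bound[OF right_inv n_gt eps_pos b1 ab1]
    note r2 = dir_bound[OF right_inv n_gt eps_pos b2 ab2]
    show ?thesis unfolding ev1 ev2 channel_out_def N_def
      using r1 r2 unfolding LM(1)[symmetric] LM(2)[symmetric] by (intro conjI)
  qed
qed

end
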